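(* Let $p$ be a prime, $\mathbb{C}_p$ the field of complex $p$-adic numbers with norm $|\cdot|_p$, $a,b,c\in\mathbb{C}_p$ with $b\neq0$, $c\neq ab$, $f(x)=\frac{x+a}{bx+c}$ for $x\neq -c/b$. Fix a square root $\sqrt{(c-1)^2+4ab}$ and let $x_{1}=\frac{1-c+\sqrt{(c-1)^2+4ab}}{2b}$, $x_2=\frac{1-c-\sqrt{(c-1)^2+4ab}}{2b}$. Put $$\delta_1=\left|\frac{(bx_1+c)^2}{c-ab}\right|_p-1,\qquad \delta_2=\left|\frac{bx_1+c}{b}\right|_p-1.$$ If $x\in\mathbb{C}_p$ satisfies $|x-x_2|_p>\frac{1+\delta_2}{1+\delta_1}$, then $f(x)\in S_{1+\delta_2}(x_2)$.
   Context: $S_r(x_2)=\{y\in\mathbb{C}_p:|y-x_2|_p=r\}$. *)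

theory Defs
  imports "HOL-Computational_Algebra.Polynomial"
begin

text \<open>We characterise
  (K, N) being (isometrically isomorphic to) C_p: K has characteristic 0, N is a
  non-archimedean absolute value with N p = 1/p (so it restricts to the p-adic
  absolute value on the rationals, by Ostrowski), K is complete and algebraically
  closed, and the algebraic numbers are dense in K. These properties determine
  C_p up to isometric isomorphism (C_p = completion of an algebraic closure of Q_p).\<close>

definition abs_value :: "('a::field \<Rightarrow> real) \<Rightarrow> bool" where
  "abs_value N \<longleftrightarrow> (\<forall>x. 0 \<le> N x) \<and> (\<forall>x. N x = 0 \<longleftrightarrow> x = 0)
     \<and> (\<forall>x y. N (x * y) = N x * N y) \<and> (\<forall>x y. N (x + y) \<le> N x + N y)"

definition non_archimedean :: "('a::field \<Rightarrow> real) \<Rightarrow> bool" where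
  "non_archimedean N \<longleftrightarrow> (\<forall>x y. N (x + y) \<le> max (N x) (N y))"

definition complete_wrt :: "('a::field \<Rightarrow> real) \<Rightarrow> bool" where
  "complete_wrt N \<longleftrightarrow> (\<forall>X :: nat \<Rightarrow> 'a.
     (\<forall>e>0. \<exists>M. \<forall>m\<ge>M. \<forall>n\<ge>M. N (X m - X n) < e) \<longrightarrow>
     (\<exists>L. (\<lambda>n. N (X n - L)) \<longlonglongrightarrow> 0))"

definition alg_closed_field :: "'a::field itself \<Rightarrow> bool" where
  "alg_closed_field _ \<longleftrightarrow> (\<forall>q :: 'a poly. degree q > 0 \<longrightarrow> (\<exists>z. poly q z = 0))"

definition is_Cp :: "nat \<Rightarrow> ('a::field_char_0 \<Rightarrow> real) \<Rightarrow> bool" where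
  "is_Cp p N \<longleftrightarrow> prime p \<and> abs_value N \<and> non_archimedean N
     \<and> N (of_nat p) = 1 / real p \<and> complete_wrt N \<and> alg_closed_field TYPE('a)
     \<and> (\<forall>x. \<forall>e>0. \<exists>y. algebraic y \<and> N (x - y) < e)"

definition sphere_p :: "('a \<Rightarrow> real) \<Rightarrow> real \<Rightarrow> 'a::field \<Rightarrow> 'a set" where
  "sphere_p N r x0 = {y. N (y - x0) = r}"

end

theory Submission
  imports Defs
begin

theorem lemma3p8:
  fixes N :: "'a::field_char_0 \<Rightarrow> real" and p :: nat
    and a b c s x x1 x2 :: 'a and f :: "'a \<Rightarrow> 'a" and \<delta>1 \<delta>2 :: real
  assumes Cp: "is_Cp p N"
    and b: "b \<noteq> 0" and cab: "c \<noteq> a * b"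
    and f_def: "\<And>y. f y = (y + a) / (b * y + c)"
    and s: "s ^ 2 = (c - 1) ^ 2 + 4 * a * b"
    and x1: "x1 = (1 - c + s) / (2 * b)"
    and x2: "x2 = (1 - c - s) / (2 * b)"
    and d1: "\<delta>1 = N ((b * x1 + c) ^ 2 / (c - a * b)) - 1"
    and d2: "\<delta>2 = N ((b * x1 + c) / b) - 1"
    and hx: "N (x - x2) > (1 + \<delta>2) / (1 + \<delta>1)"
  shows "x \<noteq> - c / b \<and> f x \<in> sphere_p N (1 + \<delta>2) x2"
proof -
  have av: "abs_value N" and na: "non_archimedean N" using Cp by (auto simp: is_Cp_def)
  have Nn: "\<And>y. 0 \<le> N y" and N0: "\<And>y. N y = 0 \<longleftrightarrow> y = 0"
    and Nm: "\<And>y z. N (y * z) = N y * N z" using av by (auto simp: abs_value_def)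
  have Nu: "\<And>y z. N (y + z) \<le> max (N y) (N z)" using na by (auto simp: non_archimedean_def)
  have N1: "N 1 = 1" using Nm[of 1 1] N0[of 1] by simp
  have Nm1: "N (-1) = 1"
  proof -
    have "N (-1) * N (-1) = 1" using Nm[of "-1" "-1"] N1 by simp
    thus ?thesis using Nn[of "-1"]
      by (metis power2_eq_square one_power2 power2_eq_imp_eq zero_le_one)
  qed
  have Nneg: "\<And>z. N (- z) = N z" using Nm[of "-1"] Nm1 by (metis mult_minus1 mult_1)
  have Ndiv: "\<And>y z. N (y / z) = N y / N z"
  proof -
    fix y z :: 'a
    show "N (y / z) = N y / N z"
    proof (cases "z = 0")
      case True thus ?thesis using N0[of 0] by simp
    next
      case False
      have "N (y / z) * N z = N y" using Nm[of "y/z" z] False by simp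
      moreover have "N z \<noteq> 0" using N0 False by simp
      ultimately show ?thesis by (simp add: field_simps)
    qed
  qed
  have strict: "\<And>y z. N z < N y \<Longrightarrow> N (y + z) = N y"
  proof -
    fix y z :: 'a assume h: "N z < N y"
    have "N (y + z) \<le> N y" using Nu[of y z] h by simp
    moreover have "N y \<le> max (N (y + z)) (N (- z))" using Nu[of "y + z" "- z"] by simp
    ultimately show "N (y + z) = N y" using h Nneg[of z] by linarith
  qed
  define u where "u = b * x1 + c"
  define v where "v = b * x2 + c"
  have bx1: "b * x1 = (1 - c + s) / 2" using x1 b by simp
  have bx2: "b * x2 = (1 - c - s) / 2" using x2 b by simp
  have uv: "u * v = c - a * b"
  proof -
    have "u * v = ((1 + c + s) / 2) * ((1 + c - s) / 2)"
      unfolding u_def v_def bx1 bx2 by (simp add: field_simps)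
    also have "\<dots> = ((1 + c)^2 - s^2) / 4" by (simp add: field_simps power2_eq_square)
    also have "\<dots> = c - a * b" unfolding s by (simp add: field_simps power2_eq_square)
    finally show ?thesis .
  qed
  have uv0: "u * v \<noteq> 0" using uv cab by simp
  hence u0: "u \<noteq> 0" and v0: "v \<noteq> 0" by auto
  have Nu0: "N u > 0" and Nv0: "N v > 0" and Nb0: "N b > 0"
    using u0 v0 b N0 Nn by (metis less_eq_real_def)+
  have fix2: "x2 + a = x2 * v"
  proof -
    have "b * x2 * x2 + (c - 1) * x2 - a = 0"
    proof -
      have "4 * b * (b * x2 * x2 + (c - 1) * x2 - a) =
            (2 * (b * x2)) * (2 * (b * x2)) + 2 * (c - 1) * (2 * (b * x2)) - 4 * a * b"
        by (simp add: field_simps)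
      also have "\<dots> = s^2 - ((c - 1)^2 + 4*a*b)" unfolding bx2 by (simp add: field_simps power2_eq_square)
      also have "\<dots> = 0" using s by simp
      finally show ?thesis using b by simp
    qed
    thus ?thesis unfolding v_def by (simp add: algebra_simps)
  qed
  have sum12: "b * x1 + b * x2 = 1 - c" unfolding bx1 bx2 by (simp add: field_simps)
  have uvsum: "1 - b * x2 = u" unfolding u_def using sum12
    by (simp add: algebra_simps)
  have e1: "1 + \<delta>1 = N u / N v"
  proof -
    have "1 + \<delta>1 = N u * N u / (N u * N v)"
      unfolding d1 u_def[symmetric] uv[symmetric] using u0 by (simp add: Ndiv Nm power2_eq_square)
    thus ?thesis using Nu0 by simp
  qed
  have e2: "1 + \<delta>2 = N u / N b" unfolding d2 u_def[symmetric] by (simp add: Ndiv)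
  have "(1 + \<delta>2) / (1 + \<delta>1) = N v / N b" unfolding e1 e2 using Nu0 Nv0 Nb0 by simp
  hence "N (x - x2) > N v / N b" using hx by simp
  hence "N b * N (x - x2) > N v" using Nb0 by (simp add: field_simps)
  hence big: "N (b * (x - x2)) > N v" by (simp only: Nm)
  have den: "b * x + c = b * (x - x2) + v" unfolding v_def by (simp add: algebra_simps)
  have Nden: "N (b * x + c) = N (b * (x - x2))" unfolding den by (rule strict[OF big])
  have den0: "b * x + c \<noteq> 0" proof
    assume "b * x + c = 0"
    hence "N (b * (x - x2)) = 0" using Nden N0[of 0] by simp
    thus False using big Nn[of v] by linarith
  qed
  have xne: "x \<noteq> - c / b" proof
    assume "x = - c / b"
    hence "b * x + c = 0" using b by simp
    thus False using den0 by simp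
  qed
  have num: "x + a - x2 * (b * x + c) = (x - x2) * u"
  proof -
    have "x + a - x2 * (b * x + c) = x + x2 * v - x2 - x2 * (b * x + c)"
      using fix2 by (simp add: algebra_simps)
    also have "\<dots> = (x - x2) * (1 - b * x2)" unfolding v_def by (simp add: algebra_simps)
    finally show ?thesis using uvsum by simp
  qed
  have fx: "f x - x2 = (x - x2) * u / (b * x + c)"
    using den0 num unfolding f_def by (simp add: field_simps)
  have "N (f x - x2) = N (x - x2) * N u / (N b * N (x - x2))"
    unfolding fx Ndiv Nm Nden by simp
  also have "\<dots> = N u / N b"
  proof -
    have "N (x - x2) \<noteq> 0" using big Nn[of v] Nm Nb0 by auto
    thus ?thesis by simp
  qed
  finally show ?thesis using xne e2 by (simp add: sphere_p_def)
qed

end
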